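(* For every $n\in\mathbb{N}$, \[ \sum_{j=0}^{n}\sum_{i=0}^{j}\frac{\binom{n+1}{i}}{\binom{2n+1}{j}} =\sum_{k=0}^{\lfloor n/2\rfloor}(-1)^k\frac{\binom{n+1}{2k+1}}{\binom{n}{k}} =(n+1)\sum_{k=1}^{n+1}\frac{2^k}{k\binom{n+1+k}{k}} =\frac{n+1}{2^{n+1}}\sum_{k=1}^{n+1}\frac{2^k}{k} =\frac{1}{2^n}\sum_{j=0}^{n}\sum_{i=0}^{j}\frac{\binom{n+1}{i}}{\binom{n}{j}}. \] *)

theory Defs
  imports Complex_Main
begin

end

theory Submission
  imports Defs "HOL-Analysis.Analysis"
begin


lemma swap_tri: "(\<Sum>j=0..(n::nat). \<Sum>i=0..j. g i j) = (\<Sum>i=0..n. \<Sum>j=i..n. (g i j :: real))"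
proof (induction n)
  case 0 then show ?case by simp
next
  case (Suc n)
  have "(\<Sum>i=0..Suc n. \<Sum>j=i..Suc n. g i j) = (\<Sum>i=0..n. \<Sum>j=i..Suc n. g i j) + g (Suc n) (Suc n)"
    by simp
  also have "(\<Sum>i=0..n. \<Sum>j=i..Suc n. g i j) = (\<Sum>i=0..n. (\<Sum>j=i..n. g i j) + g i (Suc n))"
    by (rule sum.cong) (auto simp: sum.atLeast_Suc_atMost_Suc_shift )
  finally show ?case using Suc by (simp add: sum.distrib)
qed

lemma tele:
  fixes a b :: real
  assumes "i \<le> Suc n" "n \<le> m"
  shows "(b-a) * (\<Sum>j=i..n. a^j*b^(m-j)) = a^i*b^(m+1-i) - a^(n+1)*b^(m-n)"
  using assms
proof (induction n)
  case 0
  then show ?case by (cases i) (auto simp: algebra_simps)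
next
  case (Suc n)
  show ?case
  proof (cases "i = Suc (Suc n)")
    case True
    then show ?thesis using Suc.prems by (simp add: Suc_diff_Suc)
  next
    case False
    hence i: "i \<le> Suc n" using Suc.prems by simp
    have "(\<Sum>j=i..Suc n. a^j*b^(m-j)) = (\<Sum>j=i..n. a^j*b^(m-j)) + a^Suc n * b^(m - Suc n)"
      using i by simp
    hence "(b-a) * (\<Sum>j=i..Suc n. a^j*b^(m-j)) = a^i*b^(m+1-i) - a^(n+1)*b^(m-n) + (b-a)*(a^Suc n * b^(m - Suc n))"
      using Suc.IH[OF i] Suc.prems by (simp add: algebra_simps)
    also have "b^(m-n) = b * b^(m - Suc n)" using Suc.prems
      by (metis Suc_diff_le Suc_le_lessD diff_Suc_Suc less_eq_Suc_le power_Suc)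
    finally show ?thesis by (simp add: algebra_simps)
  qed
qed



lemma binsum_part:
  fixes a b :: real
  shows "(\<Sum>i=0..n. real (Suc n choose i) * a^i * b^(Suc n - i)) = (a+b)^Suc n - a^Suc n"
proof -
  have "(a+b)^Suc n = (\<Sum>i\<le>Suc n. real (Suc n choose i) * a^i * b^(Suc n - i))"
    by (rule binomial_ring)
  also have "\<dots> = (\<Sum>i=0..n. real (Suc n choose i) * a^i * b^(Suc n - i)) + a^Suc n"
    by (simp add: atMost_atLeast0)
  finally show ?thesis by simp
qed

lemma chsum_part: "(\<Sum>i=0..n. real (Suc n choose i)) = 2^Suc n - 1"
proof -
  have "real (2^Suc n) = real (\<Sum>i\<le>Suc n. (Suc n choose i))"
    by (simp only: choose_row_sum)
  also have "\<dots> = (\<Sum>i=0..n. real (Suc n choose i)) + 1"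
    by (simp add: atMost_atLeast0)
  finally show ?thesis by simp
qed

lemma ptA:
  fixes t :: real
  shows "(1-2*t) * (\<Sum>j=0..n. \<Sum>i=0..j. real(Suc n choose i) * (t^j*(1-t)^(2*n+1-j)))
         = (1-t)^(n+1) * (1 - 2^(n+1)*t^(n+1))"
proof -
  define a b where "a = t" and "b = 1 - t"
  have ab: "a + b = 1" "1 - 2*t = b - a" by (auto simp: a_def b_def)
  have "(1-2*t) * (\<Sum>j=0..n. \<Sum>i=0..j. real(Suc n choose i) * (t^j*(1-t)^(2*n+1-j)))
     = (\<Sum>i=0..n. real(Suc n choose i) * ((b-a) * (\<Sum>j=i..n. a^j*b^(2*n+1-j))))"
    unfolding swap_tri ab(2) by (simp add: sum_distrib_left a_def b_def algebra_simps)
  also have "\<dots> = (\<Sum>i=0..n. real(Suc n choose i) * (a^i*b^(2*n+1+1-i) - a^(n+1)*b^(2*n+1-n)))"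
    by (rule sum.cong[OF refl], subst tele) auto
  also have "\<dots> = (\<Sum>i=0..n. b^(n+1) * (real(Suc n choose i) * a^i*b^(Suc n-i)) - a^(n+1)*b^(n+1) * real(Suc n choose i))"
  proof (rule sum.cong[OF refl])
    fix i assume "i \<in> {0..n}"
    hence "2*n+1+1-i = (n+1) + (Suc n - i)" by simp
    hence "b^(2*n+1+1-i) = b^(n+1) * b^(Suc n - i)" by (simp only: power_add)
    moreover have "2*n+1-n = n+1" by simp
    ultimately show "real(Suc n choose i) * (a^i*b^(2*n+1+1-i) - a^(n+1)*b^(2*n+1-n)) = b^(n+1) * (real(Suc n choose i) * a^i*b^(Suc n-i)) - a^(n+1)*b^(n+1) * real(Suc n choose i)"
      by (simp add: algebra_simps)
  qed
  also have "\<dots> = b^(n+1) * (\<Sum>i=0..n. real (Suc n choose i) * a^i * b^(Suc n - i)) - a^(n+1)*b^(n+1) * (\<Sum>i=0..n. real(Suc n choose i))"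
    by (simp only: sum_subtractf sum_distrib_left)
  also have "\<dots> = b^(n+1) * ((a+b)^Suc n - a^Suc n) - a^(n+1)*b^(n+1) * (2^Suc n - 1)"
    by (simp only: binsum_part chsum_part)
  also have "\<dots> = (1-t)^(n+1) * (1 - 2^(n+1)*t^(n+1))"
    using ab(1) by (simp add: a_def b_def algebra_simps)
  finally show ?thesis .
qed

lemma ptA2:
  fixes t :: real
  shows "(1-2*t) * (\<Sum>k=0..n. 2^k * (t^k*(1-t)^(n+1))) = (1-t)^(n+1) * (1 - 2^(n+1)*t^(n+1))"
proof -
  have "1 - (2*t)^(n+1) = (1 - 2*t) * (\<Sum>k<n+1. (2*t)^k)" by (rule one_diff_power_eq)
  also have "(\<Sum>k<n+1. (2*t)^k) = (\<Sum>k=0..n. 2^k*t^k)"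
    by (simp add: power_mult_distrib atLeast0AtMost lessThan_Suc_atMost)
  finally have "1 - (2*t)^(n+1) = (1 - 2*t) * (\<Sum>k=0..n. 2^k*t^k)" .
  moreover have "(\<Sum>k=0..n. 2^k * (t^k*(1-t)^(n+1))) = (1-t)^(n+1) * (\<Sum>k=0..n. 2^k*t^k)"
    by (simp add: sum_distrib_left algebra_simps)
  ultimately have "(1-2*t) * (\<Sum>k=0..n. 2^k * (t^k*(1-t)^(n+1))) = (1-t)^(n+1) * (1 - (2*t)^(n+1))"
    by (simp only: mult_ac)
  thus ?thesis by (simp only: power_mult_distrib)
qed



lemma beta_int:
  "((\<lambda>t::real. t^a * (1-t)^b) has_integral (fact a * fact b / fact (a+b+1))) {0..1}"
proof -
  have "((\<lambda>t. t powr (real (Suc a) - 1) * (1 - t) powr (real (Suc b) - 1)) has_integral Beta (real (Suc a)) (real (Suc b))) {0..1}"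
    by (rule has_integral_Beta_real) auto
  moreover have "Beta (real (Suc a)) (real (Suc b)) = fact a * fact b / fact (a+b+1)"
  proof -
    have "Beta (real (Suc a)) (real (Suc b)) = Gamma (1 + real a) * Gamma (1 + real b) / Gamma (1 + real (a+b+1))"
      unfolding Beta_def by (simp add: add_ac)
    thus ?thesis by (simp only: Gamma_fact)
  qed
  ultimately have I: "((\<lambda>t. t powr (real a) * (1 - t) powr (real b)) has_integral (fact a * fact b / fact (a+b+1))) {0..1}"
    by simp
  show ?thesis
    by (rule has_integral_spike_finite[OF _ _ I, of "{0,1}"]) (auto simp: powr_realpow)
qed

lemma fact_binom_inv:
  assumes "j \<le> N"
  shows "fact j * fact (N-j) / fact (N+1) = 1 / (real (N+1) * real (N choose j))"
proof -
  have h: "(fact N::real) = fact j * fact (N-j) * real (N choose j)"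
    using binomial_fact_lemma[OF assms] by (metis of_nat_fact of_nat_mult)
  have "(fact (N+1) :: real) = real (N+1) * fact N" by simp
  thus ?thesis by (simp add: h)
qed

lemma S1_closed:
  "(\<Sum>j=0..n. \<Sum>i=0..j. real (Suc n choose i) / real ((2*n+1) choose j))
   = real (2*n+2) * (\<Sum>k=0..n. 2^k * (fact k * fact (n+1) / fact (k+(n+1)+1)))"
proof -
  define f where "f = (\<lambda>t::real. (\<Sum>j=0..n. \<Sum>i=0..j. real(Suc n choose i) * (t^j*(1-t)^(2*n+1-j))))"
  define g where "g = (\<lambda>t::real. (\<Sum>k=0..n. 2^k * (t^k*(1-t)^(n+1))))"
  have If: "(f has_integral (\<Sum>j=0..n. \<Sum>i=0..j. real(Suc n choose i) * (fact j * fact (2*n+1-j) / fact (j+(2*n+1-j)+1)))) {0..1}"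
    unfolding f_def
    by (intro has_integral_sum finite_atLeastAtMost has_integral_mult_right beta_int)
  have Ig: "(g has_integral (\<Sum>k=0..n. 2^k * (fact k * fact (n+1) / fact (k+(n+1)+1)))) {0..1}"
    unfolding g_def
    by (intro has_integral_sum finite_atLeastAtMost has_integral_mult_right beta_int)
  have fg: "f t = g t" if "t \<in> {0..1} - {1/2}" for t
  proof -
    have "1 - 2*t \<noteq> 0" using that by auto
    moreover have "(1-2*t) * f t = (1-2*t) * g t" unfolding f_def g_def by (simp only: ptA ptA2)
    ultimately show ?thesis by simp
  qed
  have Ig': "(f has_integral (\<Sum>k=0..n. 2^k * (fact k * fact (n+1) / fact (k+(n+1)+1)))) {0..1}"
    by (rule has_integral_spike_finite[OF _ _ Ig, of "{1/2}"]) (use fg in auto)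
  have E: "(\<Sum>j=0..n. \<Sum>i=0..j. real(Suc n choose i) * (fact j * fact (2*n+1-j) / fact (j+(2*n+1-j)+1)))
       = (\<Sum>k=0..n. 2^k * (fact k * fact (n+1) / fact (k+(n+1)+1)))"
    using has_integral_unique[OF If Ig'] .
  have "(\<Sum>j=0..n. \<Sum>i=0..j. real(Suc n choose i) * (fact j * fact (2*n+1-j) / fact (j+(2*n+1-j)+1)))
      = (\<Sum>j=0..n. \<Sum>i=0..j. real(Suc n choose i) / real ((2*n+1) choose j)) / real (2*n+2)"
    unfolding sum_divide_distrib
  proof (intro sum.cong refl)
    fix j i assume j: "j \<in> {0..n}"
    hence "j + (2*n+1-j) + 1 = (2*n+1)+1" by simp
    hence "fact j * fact (2*n+1-j) / fact (j+(2*n+1-j)+1) = (1::real) / (real (2*n+1+1) * real ((2*n+1) choose j))"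
      using fact_binom_inv[of j "2*n+1"] j by simp
    thus "real(Suc n choose i) * (fact j * fact (2*n+1-j) / fact (j+(2*n+1-j)+1)) = real(Suc n choose i) / real ((2*n+1) choose j) / real (2*n+2)"
      by simp
  qed
  with E show ?thesis by (simp add: field_simps)
qed

lemma shift1: "(\<Sum>k=1..n+1. F k) = (\<Sum>k=0..n. (F (Suc k)::real))"
  by (metis One_nat_def Suc_eq_plus1 sum.shift_bounds_cl_Suc_ivl)

lemma aux: "(F1::real) \<noteq> 0 \<Longrightarrow> F2 \<noteq> 0 \<Longrightarrow> c \<noteq> 0 \<Longrightarrow> s \<noteq> 0 \<Longrightarrow>
   2^Suc k / (s*c) = 2*(2^k*(F1*F2/(s*F1*F2*c)))"
  by (simp add: field_simps)

lemma S3_closed: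
  "real (n+1) * (\<Sum>k=1..n+1. 2^k / (real k * real ((n+1+k) choose k)))
   = real (n+1) * (\<Sum>k=0..n. 2 * (2^k * (fact k * fact (n+1) / fact (k+(n+1)+1))))"
proof -
  have "(\<Sum>k=1..n+1. 2^k / (real k * real ((n+1+k) choose k))) = (\<Sum>k=0..n. 2^Suc k / (real (Suc k) * real ((n+1+Suc k) choose Suc k)))"
    by (rule shift1)
  also have "\<dots> = (\<Sum>k=0..n. 2 * (2^k * (fact k * fact (n+1) / fact (k+(n+1)+1))))"
  proof (intro sum.cong refl)
    fix k
    define N where "N = n+1+Suc k"
    define c where "c = real (N choose Suc k)"
    have NN: "N - Suc k = n+1" "k+(n+1)+1 = N" by (simp_all add: N_def)
    have "fact (Suc k) * fact (n+1) * (N choose Suc k) = fact N"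
      using binomial_fact_lemma[of "Suc k" N] NN by (simp add: N_def)
    hence h: "(fact N::real) = fact (Suc k) * fact (n+1) * c" unfolding c_def
      by (metis of_nat_fact of_nat_mult)
    have "c \<noteq> 0" using h by auto
    moreover have fs: "(fact (Suc k)::real) = real (Suc k) * fact k" by simp
    ultimately have "2^Suc k / (real (Suc k) * c) = 2 * (2^k * (fact k * fact (n+1) / fact N))"
      unfolding h fs by (intro aux) auto
    thus "2^Suc k / (real (Suc k) * real ((n+1+Suc k) choose Suc k)) = 2 * (2^k * (fact k * fact (n+1) / fact (k+(n+1)+1)))"
      unfolding NN(2) c_def N_def .
  qed
  finally show ?thesis by simp
qed



lemma inv_binom:
  assumes "j \<le> N"
  shows "1 / real (N choose j) = fact j * fact (N-j) / fact N"
proof -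
  have h: "(fact N::real) = fact j * fact (N-j) * real (N choose j)"
    using binomial_fact_lemma[OF assms] by (metis of_nat_fact of_nat_mult)
  show ?thesis by (simp add: h)
qed

lemma gen_aux: "(c::real) \<noteq> 0 \<Longrightarrow> z \<noteq> 0 \<Longrightarrow> a*(x*b)/(z*c) + y*a*b/(z*c) = a*b/c * ((x+y)/z)"
  by (simp add: add_divide_distrib[symmetric] algebra_simps)

lemma gen_aux2: "(p::real) > 0 \<Longrightarrow> q > 0 \<Longrightarrow> X > 0 \<Longrightarrow> (q/(2*X))*(H + 2*X/q) = 1 + q/(2*p) * (p/X*H)"
  by (simp add: field_simps)

lemma pair_binom:
  assumes "j \<le> n"
  shows "1 / real (Suc n choose j) + 1 / real (Suc n choose Suc j) = real (n+2) / (real (n+1) * real (n choose j))"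
proof -
  have e1: "Suc n - j = Suc (n - j)" "Suc n - Suc j = n - j" using assms by auto
  have i1: "1 / real (Suc n choose j) = fact j * fact (Suc (n-j)) / fact (Suc n)"
  proof -
    have "j \<le> Suc n" using assms by simp
    from inv_binom[OF this] show ?thesis unfolding e1 .
  qed
  have i2: "1 / real (Suc n choose Suc j) = fact (Suc j) * fact (n-j) / fact (Suc n)"
  proof -
    have "Suc j \<le> Suc n" using assms by simp
    from inv_binom[OF this] show ?thesis unfolding e1 .
  qed
  have "1 / real (Suc n choose j) + 1 / real (Suc n choose Suc j)
      = fact j * fact (Suc (n-j)) / fact (Suc n) + fact (Suc j) * fact (n-j) / fact (Suc n)"
    by (simp only: i1 i2)
  also have "\<dots> = (fact j * fact (n-j) / fact n) * (real (n+2) / real (Suc n))"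
  proof -
    have fs: "(fact (Suc (n-j))::real) = real (Suc (n-j)) * fact (n-j)" "(fact (Suc j)::real) = real (Suc j) * fact j"
      "(fact (Suc n)::real) = real (Suc n) * fact n" by simp_all
    have r: "real (Suc (n-j)) + real (Suc j) = real (n+2)" using assms by simp
    show ?thesis unfolding fs r[symmetric] by (rule gen_aux) auto
  qed
  also have "\<dots> = real (n+2) / (real (n+1) * real (n choose j))"
  proof -
    have "real (n choose j) > 0" using assms by simp
    thus ?thesis by (simp only: inv_binom[OF assms, symmetric]) (simp add: field_simps)
  qed
  finally show ?thesis .
qed

definition U :: "nat \<Rightarrow> real" where "U n = (\<Sum>j=0..n. 1 / real (n choose j))"
definition S4f :: "nat \<Rightarrow> real" where "S4f n = real (n+1) / 2^(n+1) * (\<Sum>k=1..n+1. 2^k / real k)"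

lemma U_rec: "U (Suc n) = 1 + real (n+2) / (2 * real (n+1)) * U n"
proof -
  have "(\<Sum>j=0..n. 1 / real (Suc n choose j) + 1 / real (Suc n choose Suc j)) = (\<Sum>j=0..n. real (n+2) / (real (n+1) * real (n choose j)))"
    by (rule sum.cong[OF refl], rule pair_binom) auto
  also have "\<dots> = real (n+2) / real (n+1) * U n"
    by (simp add: U_def sum_distrib_left)
  finally have A0: "(\<Sum>j=0..n. 1 / real (Suc n choose j) + 1 / real (Suc n choose Suc j)) = real (n+2) / real (n+1) * U n" .
  have A: "(\<Sum>j=0..n. 1 / real (Suc n choose j)) + (\<Sum>j=0..n. 1 / real (Suc n choose Suc j)) = real (n+2) / real (n+1) * U n"
    using A0 by (simp only: sum.distrib)
  have B1: "U (Suc n) = (\<Sum>j=0..n. 1 / real (Suc n choose j)) + 1"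
    by (simp add: U_def)
  have B2: "U (Suc n) = 1 + (\<Sum>j=0..n. 1 / real (Suc n choose Suc j))"
    unfolding U_def sum.atLeast0_atMost_Suc_shift by (simp del: binomial_Suc_Suc)
  have "U (Suc n) = ((\<Sum>j=0..n. 1 / real (Suc n choose j)) + (\<Sum>j=0..n. 1 / real (Suc n choose Suc j)) + 2) / 2"
  proof -
    have L: "\<And>u X Y::real. u = X + 1 \<Longrightarrow> u = 1 + Y \<Longrightarrow> u = (X + Y + 2)/2" by (auto simp: field_simps)
    show ?thesis by (rule L[OF B1 B2])
  qed
  also have "\<dots> = (real (n+2) / real (n+1) * U n + 2) / 2" by (simp only: A)
  also have "\<dots> = 1 + real (n+2) / (2 * real (n+1)) * U n" by (simp add: field_simps)
  finally show ?thesis .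
qed

lemma S4_rec: "S4f (Suc n) = 1 + real (n+2) / (2 * real (n+1)) * S4f n"
proof -
  define H where "H = (\<Sum>k=1..n+1. 2^k / real k :: real)"
  have "(\<Sum>k=1..Suc n+1. 2^k / real k) = H + 2^(n+2) / real (n+2)"
    unfolding H_def by simp
  hence e: "S4f (Suc n) = real (n+2) / 2^(n+2) * (H + 2^(n+2) / real (n+2))"
    unfolding S4f_def by simp
  have e2: "S4f n = real (n+1) / 2^(n+1) * H" unfolding S4f_def H_def by simp
  have "(2::real)^(n+2) = 2 * 2^(n+1)" by simp
  thus ?thesis unfolding e e2 by (simp only:) (rule gen_aux2, auto)
qed

lemma U_S4: "U n = S4f n"
proof (induction n)
  case 0 then show ?case by (simp add: U_def S4f_def)
next
  case (Suc n) then show ?case by (simp add: U_rec S4_rec)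
qed



definition cheb :: "real \<Rightarrow> nat \<Rightarrow> real" where
  "cheb x n = (\<Sum>k\<le>n. real ((n-k) choose k) * x^k)"

definition geo :: "real \<Rightarrow> real \<Rightarrow> nat \<Rightarrow> real" where
  "geo a b n = (\<Sum>j\<le>n. a^j * b^(n-j))"

lemma geo_Suc: "geo a b (Suc n) = b * geo a b n + a^Suc n"
proof -
  have "geo a b (Suc n) = (\<Sum>j\<le>n. a^j * b^(Suc n-j)) + a^Suc n"
    unfolding geo_def by simp
  also have "(\<Sum>j\<le>n. a^j * b^(Suc n-j)) = b * geo a b n"
    unfolding geo_def sum_distrib_left
    by (rule sum.cong) (auto simp: Suc_diff_le algebra_simps)
  finally show ?thesis .
qed

lemma geo_rec: "a + b = 1 \<Longrightarrow> geo a b (Suc (Suc n)) = geo a b (Suc n) - a*b * geo a b n"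
proof -
  assume ab: "a + b = 1"
  have h1: "b * geo a b n = geo a b (Suc n) - a^Suc n" using geo_Suc[of a b n] by simp
  have "geo a b (Suc n) - a*b * geo a b n = geo a b (Suc n) - a*(b * geo a b n)" by simp
  also have "\<dots> = (1-a) * geo a b (Suc n) + a * a^Suc n" unfolding h1 by (simp add: algebra_simps)
  also have "\<dots> = b * geo a b (Suc n) + a^Suc (Suc n)" using ab by simp
  also have "\<dots> = geo a b (Suc (Suc n))" using geo_Suc[of a b "Suc n"] by simp
  finally show ?thesis by simp
qed

lemma cheb_rec: "cheb x (Suc (Suc n)) = cheb x (Suc n) + x * cheb x n"
proof -
  have L: "cheb x (Suc (Suc n)) = 1 + (\<Sum>k\<le>Suc n. real ((Suc (Suc n) - Suc k) choose Suc k) * x^Suc k)"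
    unfolding cheb_def by (simp only: sum.atMost_Suc_shift) simp
  have split: "real ((Suc (Suc n) - Suc k) choose Suc k) = real ((n - k) choose Suc k) + real ((n-k) choose k)"
    if "k \<le> Suc n" for k
  proof (cases "k \<le> n")
    case True
    hence "Suc (Suc n) - Suc k = Suc (n - k)" by simp
    thus ?thesis by simp
  next
    case False
    hence "k = Suc n" using that by simp
    thus ?thesis by simp
  qed
  have "(\<Sum>k\<le>Suc n. real ((Suc (Suc n) - Suc k) choose Suc k) * x^Suc k)
      = (\<Sum>k\<le>Suc n. real ((n - k) choose Suc k) * x^Suc k) + x * (\<Sum>k\<le>Suc n. real ((n-k) choose k) * x^k)"
  proof -
    have "(\<Sum>k\<le>Suc n. real ((Suc (Suc n) - Suc k) choose Suc k) * x^Suc k)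
       = (\<Sum>k\<le>Suc n. real ((n - k) choose Suc k) * x^Suc k + x * (real ((n-k) choose k) * x^k))"
    proof (rule sum.cong[OF refl])
      fix k assume "k \<in> {..Suc n}"
      hence "k \<le> Suc n" by simp
      show "real ((Suc (Suc n) - Suc k) choose Suc k) * x^Suc k = real ((n - k) choose Suc k) * x^Suc k + x * (real ((n-k) choose k) * x^k)"
        by (simp only: split[OF \<open>k \<le> Suc n\<close>] distrib_right distrib_left power_Suc mult_ac)
    qed
    thus ?thesis by (simp only: sum.distrib sum_distrib_left)
  qed
  moreover have "(\<Sum>k\<le>Suc n. real ((n-k) choose k) * x^k) = cheb x n"
    unfolding cheb_def by simp
  moreover have "1 + (\<Sum>k\<le>Suc n. real ((n - k) choose Suc k) * x^Suc k) = cheb x (Suc n)"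
  proof -
    have "cheb x (Suc n) = 1 + (\<Sum>k\<le>n. real ((Suc n - Suc k) choose Suc k) * x^Suc k)"
      unfolding cheb_def by (simp only: sum.atMost_Suc_shift) simp
    also have "\<dots> = 1 + (\<Sum>k\<le>Suc n. real ((n - k) choose Suc k) * x^Suc k)"
      by simp
    finally show ?thesis by simp
  qed
  ultimately show ?thesis using L by simp
qed

lemma cheb_geo: assumes "a + b = 1" shows "cheb (-(a*b)) n = geo a b n"
proof -
  have "cheb (-(a*b)) n = geo a b n \<and> cheb (-(a*b)) (Suc n) = geo a b (Suc n)"
  proof (induction n)
    case 0
    then show ?case using assms by (simp add: cheb_def geo_def)
  next
    case (Suc n)
    then show ?case using assms by (simp add: cheb_rec geo_rec[OF assms])
  qed
  thus ?thesis by simp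
qed



lemma auxD: assumes "(F::real) \<noteq> 0" "x+y+2 \<noteq> 0" shows
  "2*(p*(a*((y+1)*b)/((x+y+2)*F))) - 2*(p*(a*b/F))/2 = p*a*b/F - 2*p*((x+1)*a)*b/((x+y+2)*F)"
proof -
  have e: "F * x + (F * y + F * 2) = F*(x+y+2)" by (simp add: algebra_simps)
  have "F*(x+y+2) \<noteq> 0" using assms by simp
  hence "F * x + (F * y + F * 2) \<noteq> 0" using e by simp
  thus ?thesis using assms by (simp add: field_simps)
qed
lemma aux2: assumes "(F::real) \<noteq> 0" "(m::real) \<ge> 0" shows "2*(p*(a*a/F))/2 = 2*p*((m+1)*a)*a/((2*m+2)*F)"
proof -
  have e: "F * 2 + F * (m * 2) = F*(2*m+2)" by (simp add: algebra_simps)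
  have "F*(2*m+2) \<noteq> 0" using assms by simp
  hence "F * 2 + F * (m * 2) \<noteq> 0" using e by simp
  thus ?thesis using assms by (simp add: field_simps)
qed

definition Wf :: "nat \<Rightarrow> real" where
  "Wf m = (\<Sum>k<m. 2*(2^k*(fact k*fact m/fact(k+m+1))))"

definition G :: "nat \<Rightarrow> nat \<Rightarrow> real" where
  "G m k = 2^k*fact k*fact m/fact(m+1+k)"

lemma id1: "2*(2^k*(fact k*fact (Suc m)/fact(k+Suc m+1))) - 2*(2^k*(fact k*fact m/fact(k+m+1)))/2
   = G m k - G m (Suc k)"
proof -
  have f1: "(fact (k+Suc m+1)::real) = (real k + real m + 2) * fact (k+m+1)"
    by (simp add: algebra_simps)
  have f2: "(fact (m+1+Suc k)::real) = (real k + real m + 2) * fact (k+m+1)"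
    by (simp add: algebra_simps)
  have f3: "(fact (Suc m)::real) = (real m + 1) * fact m" by simp
  have f4: "(fact (Suc k)::real) = (real k + 1) * fact k" by simp
  have f5: "m+1+k = k+m+1" by simp
  have p: "(2::real)^Suc k = 2*2^k" by simp
  show ?thesis unfolding G_def f1 f2 f3 f4 f5 p
    by (rule auxD) auto
qed

lemma id2: "2*(2^m*(fact m*fact m/fact(m+m+1)))/2 = G m (Suc m)"
proof -
  have f2: "(fact (m+1+Suc m)::real) = (2*real m + 2) * fact (m+m+1)"
    by (simp add: algebra_simps)
  have f4: "(fact (Suc m)::real) = (real m + 1) * fact m" by simp
  have p: "(2::real)^Suc m = 2*2^m" by simp
  show ?thesis unfolding G_def f2 f4 p by (rule aux2) auto
qed

lemma Wf_rec: "Wf (Suc m) = Wf m / 2 + 1 / real (Suc m)"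
proof -
  have "Wf (Suc m) = (\<Sum>k<Suc m. 2*(2^k*(fact k*fact (Suc m)/fact(k+Suc m+1))) - 2*(2^k*(fact k*fact m/fact(k+m+1)))/2)
      + (\<Sum>k<Suc m. 2*(2^k*(fact k*fact m/fact(k+m+1)))/2)"
    unfolding Wf_def by (simp add: sum_subtractf)
  also have "(\<Sum>k<Suc m. 2*(2^k*(fact k*fact (Suc m)/fact(k+Suc m+1))) - 2*(2^k*(fact k*fact m/fact(k+m+1)))/2)
      = (\<Sum>k<Suc m. G m k - G m (Suc k))"
    by (simp only: id1)
  also have "\<dots> = G m 0 - G m (Suc m)" by (rule sum_lessThan_telescope')
  also have "(\<Sum>k<Suc m. 2*(2^k*(fact k*fact m/fact(k+m+1)))/2) = Wf m / 2 + G m (Suc m)"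
    unfolding Wf_def by (simp only: sum.lessThan_Suc id2 sum_divide_distrib)
  also have "G m 0 = 1 / real (Suc m)"
  proof -
    have "(fact (m+1+0)::real) = real (Suc m) * fact m" by simp
    thus ?thesis unfolding G_def by simp
  qed
  finally show ?thesis by simp
qed

lemma Wf_closed: "Wf m = (\<Sum>k=1..m. 2^k / real k) / 2^m"
proof (induction m)
  case 0 then show ?case by (simp add: Wf_def)
next
  case (Suc m)
  show ?case unfolding Wf_rec Suc by (simp add: field_simps)
qed



lemma cheb_pt: "(\<Sum>k=0..n div 2. (-1)^k * real ((n-k) choose k) * (t^k*(1-t)^k)) = (\<Sum>j=0..n. t^j*(1-t)^(n-j))"
proof -
  have "cheb (-(t*(1-t))) n = geo t (1-t) n" by (rule cheb_geo) simp
  also have "geo t (1-t) n = (\<Sum>j=0..n. t^j*(1-t)^(n-j))" unfolding geo_def by (simp add: atMost_atLeast0)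
  also have "cheb (-(t*(1-t))) n = (\<Sum>k\<le>n. (-1)^k * real ((n-k) choose k) * (t^k*(1-t)^k))"
    unfolding cheb_def
  proof (rule sum.cong[OF refl])
    fix k
    have "(-(t*(1-t)))^k = (-1)^k * (t^k*(1-t)^k)" by (simp only: power_minus[of "t*(1-t)"] power_mult_distrib)
    thus "real ((n-k) choose k) * (-(t*(1-t)))^k = (-1)^k * real ((n-k) choose k) * (t^k*(1-t)^k)" by simp
  qed
  also have "\<dots> = (\<Sum>k=0..n div 2. (-1)^k * real ((n-k) choose k) * (t^k*(1-t)^k))"
  proof (rule sum.mono_neutral_right)
    show "finite {..n}" by simp
    show "{0..n div 2} \<subseteq> {..n}" by auto
    show "\<forall>i\<in>{..n} - {0..n div 2}. (-1)^i * real ((n-i) choose i) * (t^i*(1-t)^i) = 0"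
    proof
      fix i assume "i \<in> {..n} - {0..n div 2}"
      hence "n - i < i" by auto
      thus "(-1)^i * real ((n-i) choose i) * (t^i*(1-t)^i) = 0" by simp
    qed
  qed
  finally show ?thesis by simp
qed

lemma auxB: assumes "Fn > 0" "Fk > 0" "F2 > 0" "Fa > 0" "Fb > 0" "N > 0"
  shows "(s::real) * (N*Fn/(F2*Fa)) / (Fn/(Fk*Fb)) = N*(s*(Fb/(Fk*Fa))*(Fk*Fk/F2))"
  using assms by (simp add: field_simps)

lemma S2_term:
  assumes "k \<le> n div 2"
  shows "(-1)^k * real (Suc n choose (2*k+1)) / real (n choose k)
       = real (n+1) * ((-1)^k * real ((n-k) choose k) * (fact k * fact k / fact (k+k+1)))"
proof -
  have k1: "2*k+1 \<le> Suc n" "k \<le> n" "k \<le> n - k" using assms by auto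
  have e1: "Suc n - (2*k+1) = n - 2*k" "n - k - k = n - 2*k" "k+k+1 = 2*k+1" by auto
  have c1: "real (Suc n choose (2*k+1)) = real (n+1) * fact n / (fact (2*k+1) * fact (n - 2*k))"
    using binomial_fact[OF k1(1), where 'a=real] unfolding e1 by simp
  have c2: "real (n choose k) = fact n / (fact k * fact (n-k))"
    by (rule binomial_fact[OF k1(2)])
  have c3: "real ((n-k) choose k) = fact (n-k) / (fact k * fact (n - 2*k))"
    using binomial_fact[OF k1(3), where 'a=real] unfolding e1 .
  show ?thesis unfolding c1 c2 c3 e1(3)
    apply (rule auxB)
    apply simp_all
    done
qed

lemma S2_U: "(\<Sum>k=0..n div 2. (-1)^k * real (Suc n choose (2*k+1)) / real (n choose k)) = U n"
proof -
  have I1: "((\<lambda>t::real. \<Sum>k=0..n div 2. (-1)^k * real ((n-k) choose k) * (t^k*(1-t)^k)) has_integral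
            (\<Sum>k=0..n div 2. (-1)^k * real ((n-k) choose k) * (fact k * fact k / fact (k+k+1)))) {0..1}"
    by (intro has_integral_sum finite_atLeastAtMost has_integral_mult_right beta_int)
  have I2: "((\<lambda>t::real. \<Sum>j=0..n. t^j*(1-t)^(n-j)) has_integral
            (\<Sum>j=0..n. fact j * fact (n-j) / fact (j+(n-j)+1))) {0..1}"
    by (intro has_integral_sum finite_atLeastAtMost beta_int)
  have I1': "((\<lambda>t::real. \<Sum>j=0..n. t^j*(1-t)^(n-j)) has_integral
            (\<Sum>k=0..n div 2. (-1)^k * real ((n-k) choose k) * (fact k * fact k / fact (k+k+1)))) {0..1}"
    using I1 by (simp only: cheb_pt)
  have E: "(\<Sum>k=0..n div 2. (-1)^k * real ((n-k) choose k) * (fact k * fact k / fact (k+k+1)))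
        = (\<Sum>j=0..n. fact j * fact (n-j) / fact (j+(n-j)+1))"
    by (rule has_integral_unique[OF I1' I2])
  have F: "(\<Sum>j=0..n. fact j * fact (n-j) / fact (j+(n-j)+1)) = U n / real (n+1)"
    unfolding U_def sum_divide_distrib
  proof (rule sum.cong[OF refl])
    fix j assume "j \<in> {0..n}"
    hence j: "j \<le> n" by simp
    hence "j+(n-j)+1 = n+1" by simp
    thus "fact j * fact (n-j) / fact (j+(n-j)+1) = 1 / real (n choose j) / real (n+1)"
      using fact_binom_inv[OF j] by simp
  qed
  have "(\<Sum>k=0..n div 2. (-1)^k * real (Suc n choose (2*k+1)) / real (n choose k))
      = (\<Sum>k=0..n div 2. real (n+1) * ((-1)^k * real ((n-k) choose k) * (fact k * fact k / fact (k+k+1))))"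
    by (rule sum.cong[OF refl]) (rule S2_term, simp)
  also have "\<dots> = real (n+1) * (U n / real (n+1))"
    unfolding sum_distrib_left[symmetric] E F ..
  finally show ?thesis by simp
qed



definition Pf :: "nat \<Rightarrow> nat \<Rightarrow> real" where "Pf n j = (\<Sum>i=0..j. real (Suc n choose i))"

lemma Psym: "j \<le> n \<Longrightarrow> Pf n j + Pf n (n-j) = 2^(n+1)"
proof (induction j)
  case 0
  then show ?case unfolding Pf_def using chsum_part[of n] by simp
next
  case (Suc j)
  hence IH: "Pf n j + Pf n (n-j) = 2^(n+1)" by simp
  have nj: "n - j = Suc (n - Suc j)" using Suc.prems by simp
  have "Pf n (n-j) = Pf n (n - Suc j) + real (Suc n choose (n-j))"
    unfolding Pf_def nj by simp
  moreover have "Suc n choose (n-j) = Suc n choose Suc j"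
    using binomial_symmetric[of "Suc j" "Suc n"] Suc.prems by (simp add: Suc_diff_le)
  moreover have "Pf n (Suc j) = Pf n j + real (Suc n choose Suc j)"
    unfolding Pf_def by simp
  ultimately show ?case using IH by simp
qed

lemma S5_U: "1 / 2^n * (\<Sum>j=0..n. \<Sum>i=0..j. real (Suc n choose i) / real (n choose j)) = U n"
proof -
  have e1: "(\<Sum>j=0..n. \<Sum>i=0..j. real (Suc n choose i) / real (n choose j)) = (\<Sum>j=0..n. Pf n j / real (n choose j))"
    unfolding Pf_def by (simp add: sum_divide_distrib)
  have "(\<Sum>j=0..n. Pf n j / real (n choose j)) = (\<Sum>j=0..n. Pf n (n+0-j) / real (n choose (n+0-j)))"
    by (rule sum.atLeastAtMost_rev)
  also have "\<dots> = (\<Sum>j=0..n. Pf n (n-j) / real (n choose j))"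
    by (rule sum.cong) (auto simp: binomial_symmetric[symmetric])
  finally have e2: "(\<Sum>j=0..n. Pf n j / real (n choose j)) = (\<Sum>j=0..n. Pf n (n-j) / real (n choose j))" .
  have "2 * (\<Sum>j=0..n. Pf n j / real (n choose j)) = (\<Sum>j=0..n. (Pf n j + Pf n (n-j)) / real (n choose j))"
    using e2 by (simp add: add_divide_distrib sum.distrib)
  also have "\<dots> = (\<Sum>j=0..n. 2^(n+1) / real (n choose j))"
    by (rule sum.cong) (auto simp: Psym)
  also have "\<dots> = 2^(n+1) * U n" unfolding U_def by (simp add: sum_distrib_left)
  finally have "(\<Sum>j=0..n. Pf n j / real (n choose j)) = 2^n * U n" by simp
  thus ?thesis unfolding e1 by simp
qed


theorem proposition1:
  fixes n :: nat
  defines "S1 \<equiv> (\<Sum>j=0..n. \<Sum>i=0..j. real (Suc n choose i) / real ((2*n+1) choose j))"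
      and "S2 \<equiv> (\<Sum>k=0..n div 2. (-1)^k * real (Suc n choose (2*k+1)) / real (n choose k))"
      and "S3 \<equiv> real (n+1) * (\<Sum>k=1..n+1. 2^k / (real k * real ((n+1+k) choose k)))"
      and "S4 \<equiv> real (n+1) / 2^(n+1) * (\<Sum>k=1..n+1. 2^k / real k)"
      and "S5 \<equiv> 1 / 2^n * (\<Sum>j=0..n. \<Sum>i=0..j. real (Suc n choose i) / real (n choose j))"
  shows "S1 = S2 \<and> S2 = S3 \<and> S3 = S4 \<and> S4 = S5"
proof -
  have W: "Wf (n+1) = (\<Sum>k=0..n. 2 * (2^k * (fact k * fact (n+1) / fact (k+(n+1)+1))))"
    unfolding Wf_def by (simp only: atLeast0AtMost Suc_eq_plus1[symmetric] lessThan_Suc_atMost)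
  have S13: "S1 = S3"
    unfolding S1_def S3_def S1_closed S3_closed sum_distrib_left[symmetric] by simp
  have S34: "S3 = S4"
    unfolding S3_def S4_def S3_closed W[symmetric] Wf_closed by simp
  have S4U: "S4 = U n" unfolding S4_def U_S4 S4f_def ..
  have S2U: "S2 = U n" unfolding S2_def by (rule S2_U)
  have S5U: "S5 = U n" unfolding S5_def by (rule S5_U)
  show ?thesis using S13 S34 S4U S2U S5U by simp
qed

end
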